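(* Let $X$ be a space, $Y$ a metrizable space and $\kappa$ an infinite cardinal. (a) If $X$ is a strict compact-chain of length $\kappa$, then $\mathsf{L_{cl}}(X,Y)$ holds. (b) If $X$ is countably compact and is a strict chain of length $\kappa$ of open subsets each contained in some Lindelöf subset of $X$, then $\mathsf{BR}(X,Y)$ holds. (c) In particular, if $X$ is a countably compact Type I space, then both $\mathsf{BR_{cl}}(X,Y)$ and $\mathsf{L_{cl}}(X,Y)$ hold.
   Context: All spaces are Hausdorff and maps continuous. For a property $\mathcal P$, $X$ is a strict $\mathcal P$-chain of length $\kappa$ if $X=\bigcup_{\alpha<\kappa}H_\alpha$ with $H_\alpha\subsetneq H_\beta$ for $\alpha<\beta$ and each $H_\alpha$ having $\mathcal P$. A space $X$ is of Type I if $X=\bigcup_{\alpha<\omega_1}X_\alpha$ with $X_\alpha$ open, $\overline{X_\alpha}\subset X_\beta$ for $\alpha<\beta$, $\overline{X_\alpha}$ Lindelöf, and $X\neq X_\alpha$ for all $\alpha$. For a non-Lindelöf space $X$ and a space $Y$: $\mathsf{L}(X,Y)$ means that for every continuous $f:X\to Y$ there is a Lindelöf $Z\subset X$ with $f(Z)=f(X)$; $\mathsf{BR}(X,Y)$ means that for every continuous $f:X\to Y$ there is a Lindelöf $Z\subset X$ such that $f(X\setminus W)=f(X\setminus Z)$ for every Lindelöf $W\supseteq Z$. The subscript $\mathsf{cl}$ means that $Z$ can moreover be chosen closed. (For Lindelöf $X$ these properties are regarded as trivially true.) *)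

theory Defs
  imports "HOL-Analysis.Analysis"
begin

definition Lindelof_in :: "'a topology \<Rightarrow> 'a set \<Rightarrow> bool" where
  "Lindelof_in X Z \<longleftrightarrow> Z \<subseteq> topspace X \<and> Lindelof_space (subtopology X Z)"

definition countably_compact_space :: "'a topology \<Rightarrow> bool" where
  "countably_compact_space X \<longleftrightarrow>
     (\<forall>\<U>. countable \<U> \<and> (\<forall>U\<in>\<U>. openin X U) \<and> topspace X \<subseteq> \<Union>\<U>
          \<longrightarrow> (\<exists>\<V>. finite \<V> \<and> \<V> \<subseteq> \<U> \<and> topspace X \<subseteq> \<Union>\<V>))"

text \<open>X is a strict P-chain of length kappa, where kappa is given as a cardinal
  order relation r (indices = Field r, alpha < beta iff (alpha,beta) in r and alpha ~= beta).\<close>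
definition strict_chain :: "'i rel \<Rightarrow> 'a topology \<Rightarrow> ('a set \<Rightarrow> bool) \<Rightarrow> bool" where
  "strict_chain r X P \<longleftrightarrow>
     (\<exists>H :: 'i \<Rightarrow> 'a set.
        topspace X = (\<Union>\<alpha>\<in>Field r. H \<alpha>) \<and>
        (\<forall>\<alpha>\<in>Field r. \<forall>\<beta>\<in>Field r. (\<alpha>, \<beta>) \<in> r \<and> \<alpha> \<noteq> \<beta> \<longrightarrow> H \<alpha> \<subset> H \<beta>) \<and>
        (\<forall>\<alpha>\<in>Field r. P (H \<alpha>)))"

text \<open>Type I spaces; omega_1 is represented by the successor cardinal of natLeq.\<close>
definition type_I_space :: "'a topology \<Rightarrow> bool" where
  "type_I_space X \<longleftrightarrow>
     (\<exists>XX :: nat set \<Rightarrow> 'a set.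
        topspace X = (\<Union>\<alpha>\<in>Field (cardSuc natLeq). XX \<alpha>) \<and>
        (\<forall>\<alpha>\<in>Field (cardSuc natLeq). openin X (XX \<alpha>) \<and>
              Lindelof_in X (X closure_of (XX \<alpha>)) \<and> topspace X \<noteq> XX \<alpha>) \<and>
        (\<forall>\<alpha>\<in>Field (cardSuc natLeq). \<forall>\<beta>\<in>Field (cardSuc natLeq).
            (\<alpha>, \<beta>) \<in> cardSuc natLeq \<and> \<alpha> \<noteq> \<beta> \<longrightarrow> X closure_of (XX \<alpha>) \<subseteq> XX \<beta>))"

definition L_prop :: "'a topology \<Rightarrow> 'b topology \<Rightarrow> bool" where
  "L_prop X Y \<longleftrightarrow> Lindelof_space X \<or>
     (\<forall>f. continuous_map X Y f \<longrightarrow>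
        (\<exists>Z. Lindelof_in X Z \<and> f ` Z = f ` topspace X))"

definition L_cl_prop :: "'a topology \<Rightarrow> 'b topology \<Rightarrow> bool" where
  "L_cl_prop X Y \<longleftrightarrow> Lindelof_space X \<or>
     (\<forall>f. continuous_map X Y f \<longrightarrow>
        (\<exists>Z. Lindelof_in X Z \<and> closedin X Z \<and> f ` Z = f ` topspace X))"

definition BR_prop :: "'a topology \<Rightarrow> 'b topology \<Rightarrow> bool" where
  "BR_prop X Y \<longleftrightarrow> Lindelof_space X \<or>
     (\<forall>f. continuous_map X Y f \<longrightarrow>
        (\<exists>Z. Lindelof_in X Z \<and>
           (\<forall>W. Lindelof_in X W \<and> Z \<subseteq> W \<longrightarrow>
               f ` (topspace X - W) = f ` (topspace X - Z))))"

definition BR_cl_prop :: "'a topology \<Rightarrow> 'b topology \<Rightarrow> bool" where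
  "BR_cl_prop X Y \<longleftrightarrow> Lindelof_space X \<or>
     (\<forall>f. continuous_map X Y f \<longrightarrow>
        (\<exists>Z. Lindelof_in X Z \<and> closedin X Z \<and>
           (\<forall>W. Lindelof_in X W \<and> Z \<subseteq> W \<longrightarrow>
               f ` (topspace X - W) = f ` (topspace X - Z))))"

end

theory Submission
  imports Defs
begin

lemma cc_image_cover:
  assumes cc: "countably_compact_space X" and C: "closedin X C" and f: "continuous_map X Y f"
    and U: "countable \<U>" "\<forall>U\<in>\<U>. openin Y U" "f ` C \<subseteq> \<Union>\<U>"
  shows "\<exists>\<V>. finite \<V> \<and> \<V> \<subseteq> \<U> \<and> f ` C \<subseteq> \<Union>\<V>"
proof -
  define g where "g U = {x \<in> topspace X. f x \<in> U}" for U
  let ?W = "insert (topspace X - C) (g ` \<U>)"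
  have "countable ?W" using U(1) by simp
  moreover have "\<forall>U\<in>?W. openin X U"
    using C f U(2) by (auto simp: g_def openin_continuous_map_preimage)
  moreover have "topspace X \<subseteq> \<Union>?W" using U(3) by (auto simp: g_def)
  ultimately obtain \<V>' where V': "finite \<V>'" "\<V>' \<subseteq> ?W" "topspace X \<subseteq> \<Union>\<V>'"
    using cc unfolding countably_compact_space_def by meson
  then have "\<V>' - {topspace X - C} \<subseteq> g ` \<U>" "finite (\<V>' - {topspace X - C})" by auto
  then obtain \<V> where V: "\<V> \<subseteq> \<U>" "finite \<V>" "\<V>' - {topspace X - C} = g ` \<V>"
    by (metis finite_subset_image)
  show ?thesis
  proof (intro exI conjI V)
    show "f ` C \<subseteq> \<Union>\<V>"
    proof
      fix y assume "y \<in> f ` C"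
      then obtain x where x: "x \<in> C" "y = f x" by auto
      then have "x \<in> topspace X" using C closedin_subset by blast
      then obtain V where "V \<in> \<V>'" "x \<in> V" using V' by auto
      then have "V \<in> g ` \<V>" using x V(3) by auto
      then show "y \<in> \<Union>\<V>" using \<open>x \<in> V\<close> x by (auto simp: g_def)
    qed
  qed (use V in auto)
qed

lemma cover_BW:
  assumes S: "S \<subseteq> topspace Y"
   and cov: "\<And>\<U>. countable \<U> \<Longrightarrow> \<forall>U\<in>\<U>. openin Y U \<Longrightarrow> S \<subseteq> \<Union>\<U> \<Longrightarrow> \<exists>\<V>. finite \<V> \<and> \<V> \<subseteq> \<U> \<and> S \<subseteq> \<Union>\<V>"
   and T: "T \<subseteq> S" "infinite T"
  shows "S \<inter> Y derived_set_of T \<noteq> {}"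
proof
  assume dis: "S \<inter> Y derived_set_of T = {}"
  obtain \<sigma> :: "nat \<Rightarrow> _" where \<sigma>: "inj \<sigma>" "range \<sigma> \<subseteq> T" using infinite_countable_subset T by meson
  define F where "F n = \<sigma> ` {n..}" for n
  define U where "U n = topspace Y - Y closure_of F n" for n
  have opn: "openin Y (U n)" for n by (simp add: U_def openin_diff)
  have key: "s \<in> F n" if "s \<in> Y closure_of F n" "s\<in>S" for s n
  proof -
    have "Y derived_set_of F n \<subseteq> Y derived_set_of T" using \<sigma> by (intro derived_set_of_mono) (auto simp: F_def)
    then show ?thesis using closure_of[of Y "F n"] dis that by auto
  qed
  have "S \<subseteq> \<Union>(range U)"
  proof
    fix s assume "s \<in> S"
    have "\<exists>n. s \<notin> F n"
    proof (cases "s \<in> range \<sigma>")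
      case True then obtain m where "s = \<sigma> m" by auto
      then have "s \<notin> F (Suc m)" using \<sigma>(1) by (auto simp: F_def inj_eq)
      thus ?thesis by blast
    next
      case False thus ?thesis by (auto simp: F_def)
    qed
    then obtain n where "s \<notin> F n" ..
    then have "s \<in> U n" using key \<open>s\<in>S\<close> S by (auto simp: U_def)
    thus "s \<in> \<Union>(range U)" by blast
  qed
  then obtain \<V> where V: "finite \<V>" "\<V> \<subseteq> range U" "S \<subseteq> \<Union>\<V>" using cov[of "range U"] opn by auto
  then obtain N where N: "finite N" "\<V> = U ` N" by (metis finite_subset_image)
  define n where "n = Suc (Max (insert 0 N))"
  have "\<sigma> n \<in> S" using \<sigma> T by auto
  then obtain k where k: "k \<in> N" "\<sigma> n \<in> U k" using V N by auto
  have "k \<le> n" using k N by (simp add: n_def le_SucI)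
  then have "\<sigma> n \<in> F k" by (auto simp: F_def)
  moreover have "F k \<subseteq> topspace Y" using \<sigma> T S by (auto simp: F_def)
  ultimately have "\<sigma> n \<in> Y closure_of F k" using closure_of_subset by blast
  then show False using k by (simp add: U_def)
qed

lemma metrizable_BW_compact:
  assumes "metrizable_space Y" "S \<subseteq> topspace Y" "\<And>T. T \<subseteq> S \<Longrightarrow> infinite T \<Longrightarrow> S \<inter> Y derived_set_of T \<noteq> {}"
  shows "compactin Y S"
proof -
  obtain M d where M: "Metric_space M d" and Y: "Y = Metric_space.mtopology M d"
    using assms(1) by (auto simp: metrizable_space_def)
  then show ?thesis using Metric_space.compactin_eq_Bolzano_Weierstrass[OF M, of S] Metric_space.topspace_mtopology[OF M] assms
    by auto
qed

lemma cc_image_compact: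
  assumes "countably_compact_space X" "closedin X C" "continuous_map X Y f" "metrizable_space Y"
  shows "compactin Y (f ` C)"
proof (rule metrizable_BW_compact[OF assms(4)])
  show S: "f ` C \<subseteq> topspace Y"
    using assms(2,3) closedin_subset continuous_map_image_subset_topspace by (metis image_mono order_trans)
  show "f ` C \<inter> Y derived_set_of T \<noteq> {}" if "T \<subseteq> f ` C" "infinite T" for T
    by (rule cover_BW[OF S _ that]) (use cc_image_cover[OF assms(1-3)] in blast)
qed

lemma metric_compact_base:
  assumes "metrizable_space Y" "compactin Y K"
  shows "\<exists>\<B>. countable \<B> \<and> (\<forall>B\<in>\<B>. openin Y B) \<and>
          (\<forall>U y. openin Y U \<longrightarrow> y \<in> U \<longrightarrow> y \<in> K \<longrightarrow> (\<exists>B\<in>\<B>. y \<in> B \<and> B \<subseteq> U))"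
proof -
  obtain M d where M: "Metric_space M d" and Y: "Y = Metric_space.mtopology M d"
    using assms(1) by (auto simp: metrizable_space_def)
  interpret Metric_space M d by (rule M)
  have tb: "mtotally_bounded K" using assms(2) Y compactin_imp_mtotally_bounded by blast
  have "\<forall>n::nat. \<exists>N. finite N \<and> N \<subseteq> K \<and> K \<subseteq> (\<Union>x\<in>N. mball x (inverse (Suc n)))"
    using tb unfolding mtotally_bounded_def by simp
  then obtain N where N: "\<And>n. finite (N n) \<and> N n \<subseteq> K \<and> K \<subseteq> (\<Union>x\<in>N n. mball x (inverse (Suc n)))"
    by metis
  define \<B> where "\<B> = (\<Union>n. (\<lambda>x. mball x (inverse (Suc n))) ` N n)"
  show ?thesis
  proof (intro exI conjI allI impI)
    show "countable \<B>" unfolding \<B>_def using N by (intro countable_UN) (auto intro: countable_finite)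
    show "\<forall>B\<in>\<B>. openin Y B" by (auto simp: \<B>_def Y)
    fix U y assume U: "openin Y U" and y: "y \<in> U" "y \<in> K"
    obtain \<epsilon> where \<epsilon>: "\<epsilon> > 0" "mball y \<epsilon> \<subseteq> U" using U y unfolding Y openin_mtopology by blast
    obtain n where n: "inverse (real (Suc n)) < \<epsilon>/2" using reals_Archimedean \<open>\<epsilon> > 0\<close> by (metis half_gt_zero)
    obtain x where x: "x \<in> N n" "y \<in> mball x (inverse (Suc n))" using N[of n] y by auto
    have "mball x (inverse (Suc n)) \<subseteq> mball y \<epsilon>"
    proof
      fix z assume z: "z \<in> mball x (inverse (Suc n))"
      have "d y z \<le> d x y + d x z" using x z by (metis in_mball triangle commute)
      also have "\<dots> < \<epsilon>" using x z n by auto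
      finally show "z \<in> mball y \<epsilon>" using x z by auto
    qed
    then show "\<exists>B\<in>\<B>. y \<in> B \<and> B \<subseteq> U" using x \<epsilon> unfolding \<B>_def by blast
  qed
qed

lemma stab_L:
  assumes Y: "Hausdorff_space Y" "metrizable_space Y" and f: "continuous_map X Y f"
   and cov: "topspace X = (\<Union>\<alpha>\<in>I. K \<alpha>)"
   and cK: "\<And>\<alpha>. \<alpha> \<in> I \<Longrightarrow> compactin Y (f ` K \<alpha>)"
   and cX: "compactin Y (f ` topspace X)"
   and CB: "\<And>S. S \<subseteq> I \<Longrightarrow> countable S \<Longrightarrow> \<exists>\<delta>\<in>I. \<forall>\<alpha>\<in>S. K \<alpha> \<subseteq> K \<delta>"
  shows "\<exists>\<beta>\<in>I. f ` K \<beta> = f ` topspace X"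
proof -
  obtain \<B> where B: "countable \<B>" "\<forall>B\<in>\<B>. openin Y B"
    "\<forall>U y. openin Y U \<longrightarrow> y \<in> U \<longrightarrow> y \<in> f ` topspace X \<longrightarrow> (\<exists>B\<in>\<B>. y \<in> B \<and> B \<subseteq> U)"
    using metric_compact_base[OF Y(2) cX] by blast
  let ?BB = "{B\<in>\<B>. B \<inter> f ` topspace X \<noteq> {}}"
  have "\<forall>B\<in>?BB. \<exists>\<alpha>. \<alpha>\<in>I \<and> (\<exists>x\<in>K \<alpha>. f x \<in> B)"
  proof
    fix B assume "B \<in> ?BB"
    then obtain x where x: "x \<in> topspace X" "f x \<in> B" by auto
    then obtain \<alpha> where "\<alpha> \<in> I" "x \<in> K \<alpha>" using cov by auto
    then show "\<exists>\<alpha>. \<alpha>\<in>I \<and> (\<exists>x\<in>K \<alpha>. f x \<in> B)" using x by blast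
  qed
  from bchoice[OF this] obtain a where a0: "\<forall>B\<in>?BB. a B \<in> I \<and> (\<exists>x\<in>K (a B). f x \<in> B)" ..
  then have a: "\<And>B. B \<in> ?BB \<Longrightarrow> a B \<in> I \<and> (\<exists>x\<in>K (a B). f x \<in> B)" by blast
  obtain \<delta> where \<delta>: "\<delta>\<in>I" "\<forall>\<alpha>\<in>a ` ?BB. K \<alpha> \<subseteq> K \<delta>"
    using CB[of "a ` ?BB"] a B(1) by auto
  show ?thesis
  proof (intro bexI[OF _ \<delta>(1)] equalityI)
    show "f ` K \<delta> \<subseteq> f ` topspace X" using cov \<delta> by auto
    show "f ` topspace X \<subseteq> f ` K \<delta>"
    proof
      fix y assume y: "y \<in> f ` topspace X"
      show "y \<in> f ` K \<delta>"
      proof (rule ccontr)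
        assume ny: "y \<notin> f ` K \<delta>"
        have "closedin Y (f ` K \<delta>)" using compactin_imp_closedin Y(1) cK \<delta>(1) by blast
        then have "openin Y (topspace Y - f ` K \<delta>)" by auto
        moreover have "y \<in> topspace Y" using y f continuous_map_image_subset_topspace by blast
        ultimately obtain B where B1: "B \<in> \<B>" "y \<in> B" "B \<subseteq> topspace Y - f ` K \<delta>"
          using B(3) ny y by blast
        then have "B \<in> ?BB" using y by auto
        then obtain x where "x \<in> K (a B)" "f x \<in> B" using a by blast
        moreover have "K (a B) \<subseteq> K \<delta>" using \<delta>(2) \<open>B \<in> ?BB\<close> by blast
        ultimately show False using B1 by blast
      qed
    qed
  qed
qed

lemma stab_BR:
  assumes Y: "Hausdorff_space Y" "metrizable_space Y" and f: "continuous_map X Y f"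
   and cC: "\<And>\<alpha>. \<alpha> \<in> I \<Longrightarrow> compactin Y (f ` (topspace X - G \<alpha>))"
   and cX: "compactin Y (f ` topspace X)"
   and CB: "\<And>S. S \<subseteq> I \<Longrightarrow> countable S \<Longrightarrow> \<exists>\<delta>\<in>I. \<forall>\<alpha>\<in>S. G \<alpha> \<subseteq> G \<delta>"
  shows "\<exists>\<beta>0\<in>I. \<forall>\<beta>\<in>I. f ` (topspace X - G \<beta>0) \<subseteq> f ` (topspace X - G \<beta>)"
proof -
  obtain \<B> where B: "countable \<B>" "\<forall>B\<in>\<B>. openin Y B"
    "\<forall>U y. openin Y U \<longrightarrow> y \<in> U \<longrightarrow> y \<in> f ` topspace X \<longrightarrow> (\<exists>B\<in>\<B>. y \<in> B \<and> B \<subseteq> U)"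
    using metric_compact_base[OF Y(2) cX] by blast
  define C where "C \<beta> = f ` (topspace X - G \<beta>)" for \<beta>
  let ?BB = "{B\<in>\<B>. \<exists>\<beta>\<in>I. B \<inter> C \<beta> = {}}"
  have "\<forall>B\<in>?BB. \<exists>\<beta>. \<beta>\<in>I \<and> B \<inter> C \<beta> = {}" by blast
  from bchoice[OF this] obtain b where b0: "\<forall>B\<in>?BB. b B \<in> I \<and> B \<inter> C (b B) = {}" ..
  then have b: "\<And>B. B \<in> ?BB \<Longrightarrow> b B \<in> I \<and> B \<inter> C (b B) = {}" by blast
  obtain \<delta> where \<delta>: "\<delta>\<in>I" "\<forall>\<alpha>\<in>b ` ?BB. G \<alpha> \<subseteq> G \<delta>"
  proof -
    have "b ` ?BB \<subseteq> I" using b by blast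
    moreover have "countable (b ` ?BB)" using B(1) by simp
    ultimately have "\<exists>\<delta>\<in>I. \<forall>\<alpha>\<in>b ` ?BB. G \<alpha> \<subseteq> G \<delta>" by (rule CB)
    then show ?thesis using that by blast
  qed
  show ?thesis
  proof (intro bexI[OF _ \<delta>(1)] ballI subsetI)
    fix \<beta> y assume \<beta>: "\<beta> \<in> I" and y: "y \<in> f ` (topspace X - G \<delta>)"
    show "y \<in> f ` (topspace X - G \<beta>)"
    proof (rule ccontr)
      assume ny: "y \<notin> f ` (topspace X - G \<beta>)"
      have "closedin Y (C \<beta>)" unfolding C_def using compactin_imp_closedin Y(1) cC \<beta> by blast
      then have "openin Y (topspace Y - C \<beta>)" by auto
      moreover have "y \<in> topspace Y" using y f continuous_map_image_subset_topspace by blast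
      moreover have "y \<in> topspace Y - C \<beta>" using ny \<open>y \<in> topspace Y\<close> by (simp add: C_def)
      moreover have "y \<in> f ` topspace X" using y by blast
      ultimately obtain B where B1: "B \<in> \<B>" "y \<in> B" "B \<subseteq> topspace Y - C \<beta>"
        using B(3) by blast
      then have "B \<in> ?BB" using \<beta> by auto
      then have "B \<inter> C (b B) = {}" "G (b B) \<subseteq> G \<delta>" using b \<delta>(2) by auto
      then have "y \<in> C (b B)" using y by (auto simp: C_def)
      then show False using B1 \<open>B \<inter> C (b B) = {}\<close> by blast
    qed
  qed
qed

lemma Lindelof_in_bound:
  assumes W: "Lindelof_in X W" and cov: "topspace X = (\<Union>\<alpha>\<in>I. G \<alpha>)"
    and op: "\<And>\<alpha>. \<alpha>\<in>I \<Longrightarrow> openin X (G \<alpha>)"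
    and CB: "\<And>S. S \<subseteq> I \<Longrightarrow> countable S \<Longrightarrow> \<exists>\<delta>\<in>I. \<forall>\<alpha>\<in>S. G \<alpha> \<subseteq> G \<delta>"
  shows "\<exists>\<delta>\<in>I. W \<subseteq> G \<delta>"
proof -
  have W1: "W \<subseteq> topspace X" "Lindelof_space (subtopology X W)" using W by (auto simp: Lindelof_in_def)
  have L: "\<forall>\<U>. (\<forall>U\<in>\<U>. openin X U) \<and> W \<subseteq> \<Union>\<U> \<longrightarrow> (\<exists>V. countable V \<and> V \<subseteq> \<U> \<and> W \<subseteq> \<Union>V)"
    by (fact W1(2)[unfolded Lindelof_space_subtopology_subset[OF W1(1)]])
  have "(\<forall>U\<in>G ` I. openin X U) \<and> W \<subseteq> \<Union>(G ` I)" using op W1(1) cov by auto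
  then obtain \<V> where V: "countable \<V>" "\<V> \<subseteq> G ` I" "W \<subseteq> \<Union>\<V>"
    using L[rule_format, of "G ` I"] by blast
  then obtain S where S: "countable S" "S \<subseteq> I" "\<V> = G ` S" by (meson countable_subset_image)
  have "\<exists>\<delta>\<in>I. \<forall>\<alpha>\<in>S. G \<alpha> \<subseteq> G \<delta>" using S by (intro CB) auto
  then obtain \<delta> where d: "\<delta> \<in> I" "\<forall>\<alpha>\<in>S. G \<alpha> \<subseteq> G \<delta>" by blast
  have "W \<subseteq> \<Union>(G ` S)" using V(3) S(3) by simp
  then have "W \<subseteq> G \<delta>" using d(2) by auto
  then show ?thesis using d(1) by blast
qed

lemma card_order_dichotomy:
  assumes "Card_order r" and mono: "\<And>\<alpha> \<beta>. \<alpha> \<in> Field r \<Longrightarrow> \<beta> \<in> Field r \<Longrightarrow> (\<alpha>,\<beta>) \<in> r \<Longrightarrow> H \<alpha> \<subseteq> H \<beta>"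
  shows "(\<forall>S. S \<subseteq> Field r \<and> countable S \<longrightarrow> (\<exists>\<delta>\<in>Field r. \<forall>\<alpha>\<in>S. H \<alpha> \<subseteq> H \<delta>)) \<or>
         (\<exists>S \<subseteq> Field r. countable S \<and> (\<Union>\<alpha>\<in>Field r. H \<alpha>) = (\<Union>\<alpha>\<in>S. H \<alpha>))"
proof (rule disjCI)
  have tot: "\<And>a b. a \<in> Field r \<Longrightarrow> b \<in> Field r \<Longrightarrow> a \<noteq> b \<Longrightarrow> (a,b) \<in> r \<or> (b,a) \<in> r"
    using assms(1) unfolding card_order_on_def well_order_on_def linear_order_on_def total_on_def by blast
  assume nc: "\<not> (\<exists>S \<subseteq> Field r. countable S \<and> (\<Union>\<alpha>\<in>Field r. H \<alpha>) = (\<Union>\<alpha>\<in>S. H \<alpha>))"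
  show "\<forall>S. S \<subseteq> Field r \<and> countable S \<longrightarrow> (\<exists>\<delta>\<in>Field r. \<forall>\<alpha>\<in>S. H \<alpha> \<subseteq> H \<delta>)"
  proof (intro allI impI)
    fix S assume S: "S \<subseteq> Field r \<and> countable S"
    show "\<exists>\<delta>\<in>Field r. \<forall>\<alpha>\<in>S. H \<alpha> \<subseteq> H \<delta>"
    proof (rule ccontr)
      assume nb: "\<not> (\<exists>\<delta>\<in>Field r. \<forall>\<alpha>\<in>S. H \<alpha> \<subseteq> H \<delta>)"
      have "(\<Union>\<alpha>\<in>Field r. H \<alpha>) \<subseteq> (\<Union>\<alpha>\<in>S. H \<alpha>)"
      proof
        fix x assume "x \<in> (\<Union>\<alpha>\<in>Field r. H \<alpha>)"
        then obtain \<gamma> where \<gamma>: "\<gamma> \<in> Field r" "x \<in> H \<gamma>" by auto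
        then obtain \<alpha> where \<alpha>: "\<alpha> \<in> S" "\<not> H \<alpha> \<subseteq> H \<gamma>" using nb \<gamma>(1) by blast
        then have "\<alpha> \<noteq> \<gamma>" by auto
        then have "(\<gamma>,\<alpha>) \<in> r" using tot[of \<alpha> \<gamma>] \<alpha> \<gamma> S mono by blast
        then have "x \<in> H \<alpha>" using mono \<gamma> \<alpha> S by blast
        then show "x \<in> (\<Union>\<alpha>\<in>S. H \<alpha>)" using \<alpha> by blast
      qed
      then show False using nc S by blast
    qed
  qed
qed

lemma omega1_bound:
  assumes "S \<subseteq> Field (cardSuc natLeq)" "countable S"
  shows "\<exists>\<delta>\<in>Field (cardSuc natLeq). \<forall>\<alpha>\<in>S. (\<alpha>,\<delta>) \<in> cardSuc natLeq \<and> \<alpha> \<noteq> \<delta>"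
proof -
  let ?r = "cardSuc natLeq"
  have Cr: "Card_order ?r" by (simp add: cardSuc_Card_order natLeq_Card_order)
  have inf: "\<not> finite (Field ?r)" using cardSuc_finite[OF natLeq_Card_order] Field_natLeq by auto
  have wo: "well_order_on (Field ?r) ?r" using Cr card_order_on_well_order_on by blast
  have tr: "trans ?r" and an: "antisym ?r" and rf: "refl_on (Field ?r) ?r"
    using wo unfolding well_order_on_def linear_order_on_def partial_order_on_def preorder_on_def by auto
  have chain: "relChain ?r (under ?r)" unfolding relChain_def under_def
    using tr by (auto elim: transE)
  have "S \<subseteq> (\<Union>i\<in>Field ?r. under ?r i)" using assms(1) rf unfolding under_def refl_on_def by blast
  moreover have "(card_of S, natLeq) \<in> ordLeq"
  proof -
    have "(card_of S, card_of (UNIV::nat set)) \<in> ordLeq" using assms(2) unfolding countable_def card_of_ordLeq[symmetric] by auto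
    then show ?thesis using card_of_nat ordLeq_ordIso_trans by blast
  qed
  ultimately obtain i where i: "i \<in> Field ?r" "S \<subseteq> under ?r i"
    using cardSuc_UNION[OF natLeq_Card_order _ chain] Field_natLeq by (metis infinite_UNIV_nat)
  obtain b where b: "b \<in> Field ?r" "i \<noteq> b" "(i,b) \<in> ?r" using infinite_Card_order_limit[OF Cr inf i(1)] by blast
  show ?thesis
  proof (intro bexI[OF _ b(1)] ballI conjI)
    fix \<alpha> assume "\<alpha> \<in> S"
    then have ai: "(\<alpha>,i) \<in> ?r" using i under_def by fastforce
    then show "(\<alpha>,b) \<in> ?r" using b tr by (auto elim: transE)
    show "\<alpha> \<noteq> b" using ai b an by (auto simp: antisym_def)
  qed
qed

lemma partc:
  assumes Y: "Hausdorff_space Y" "metrizable_space Y" and cc: "countably_compact_space X"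
    and XX1: "topspace X = (\<Union>\<alpha>\<in>I. XX \<alpha>)"
    and XX2: "\<forall>\<alpha>\<in>I. openin X (XX \<alpha>) \<and> Lindelof_in X (X closure_of (XX \<alpha>))"
    and strict: "\<And>S. S \<subseteq> I \<Longrightarrow> countable S \<Longrightarrow> \<exists>\<delta>\<in>I. \<forall>\<alpha>\<in>S. X closure_of XX \<alpha> \<subseteq> XX \<delta>"
  shows "BR_cl_prop X Y \<and> L_cl_prop X Y"
proof -
  let ?I = I
  note XX = XX1 XX2
  have op: "openin X (XX \<alpha>)" if "\<alpha> \<in> ?I" for \<alpha> using XX(2) that by blast
  have sub: "XX \<alpha> \<subseteq> X closure_of XX \<alpha>" if "\<alpha> \<in> ?I" for \<alpha>
    by (rule closure_of_subset[OF openin_subset[OF op[OF that]]])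
  have CBO: "\<exists>\<delta>\<in>?I. \<forall>\<alpha>\<in>S. XX \<alpha> \<subseteq> XX \<delta>" if S: "S \<subseteq> ?I" "countable S" for S
  proof -
    obtain \<delta> where d: "\<delta> \<in> ?I" "\<forall>\<alpha>\<in>S. X closure_of XX \<alpha> \<subseteq> XX \<delta>" using strict[OF S] by blast
    have "\<forall>\<alpha>\<in>S. XX \<alpha> \<subseteq> XX \<delta>"
    proof
      fix \<alpha> assume a: "\<alpha> \<in> S"
      have "XX \<alpha> \<subseteq> X closure_of XX \<alpha>" using sub a S(1) by blast
      then show "XX \<alpha> \<subseteq> XX \<delta>" using d(2) a by blast
    qed
    then show ?thesis using d(1) by blast
  qed
  have CBK: "\<exists>\<delta>\<in>?I. \<forall>\<alpha>\<in>S. X closure_of XX \<alpha> \<subseteq> X closure_of XX \<delta>" if S: "S \<subseteq> ?I" "countable S" for S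
  proof -
    obtain \<delta> where d: "\<delta> \<in> ?I" "\<forall>\<alpha>\<in>S. X closure_of XX \<alpha> \<subseteq> XX \<delta>" using strict[OF S] by blast
    have "\<forall>\<alpha>\<in>S. X closure_of XX \<alpha> \<subseteq> X closure_of XX \<delta>"
    proof
      fix \<alpha> assume a: "\<alpha> \<in> S"
      have "XX \<delta> \<subseteq> X closure_of XX \<delta>" using sub d(1) by blast
      then show "X closure_of XX \<alpha> \<subseteq> X closure_of XX \<delta>" using d(2) a by blast
    qed
    then show ?thesis using d(1) by blast
  qed
  show "BR_cl_prop X Y \<and> L_cl_prop X Y"
  proof
    show "BR_cl_prop X Y" unfolding BR_cl_prop_def
    proof (intro disjI2 allI impI)
      fix f assume f: "continuous_map X Y f"
      have cX: "compactin Y (f ` topspace X)" by (rule cc_image_compact[OF cc closedin_topspace f Y(2)])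
      have cC: "compactin Y (f ` (topspace X - XX \<alpha>))" if "\<alpha> \<in> ?I" for \<alpha>
        by (rule cc_image_compact[OF cc _ f Y(2)]) (use op[OF that] in auto)
      obtain \<beta>0 where \<beta>0: "\<beta>0 \<in> ?I" "\<forall>\<beta>\<in>?I. f ` (topspace X - XX \<beta>0) \<subseteq> f ` (topspace X - XX \<beta>)"
        using stab_BR[OF Y f cC cX CBO] by blast
      let ?Z = "X closure_of XX \<beta>0"
      show "\<exists>Z. Lindelof_in X Z \<and> closedin X Z \<and> (\<forall>W. Lindelof_in X W \<and> Z \<subseteq> W \<longrightarrow> f ` (topspace X - W) = f ` (topspace X - Z))"
      proof (intro exI conjI allI impI)
        show "Lindelof_in X ?Z" using bspec[OF XX(2) \<beta>0(1)] by simp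
        show "closedin X ?Z" by simp
        fix W assume W: "Lindelof_in X W \<and> ?Z \<subseteq> W"
        obtain \<delta> where \<delta>: "\<delta> \<in> ?I" "W \<subseteq> XX \<delta>"
          using Lindelof_in_bound[OF conjunct1[OF W] XX(1) op CBO] by blast
        show "f ` (topspace X - W) = f ` (topspace X - ?Z)"
        proof
          show "f ` (topspace X - W) \<subseteq> f ` (topspace X - ?Z)" using W by blast
          have "f ` (topspace X - ?Z) \<subseteq> f ` (topspace X - XX \<beta>0)" using sub[OF \<beta>0(1)] by blast
          also have "\<dots> \<subseteq> f ` (topspace X - XX \<delta>)" using \<beta>0(2) \<delta>(1) by blast
          also have "\<dots> \<subseteq> f ` (topspace X - W)" using \<delta>(2) by blast
          finally show "f ` (topspace X - ?Z) \<subseteq> f ` (topspace X - W)" .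
        qed
      qed
    qed
    show "L_cl_prop X Y" unfolding L_cl_prop_def
    proof (intro disjI2 allI impI)
      fix f assume f: "continuous_map X Y f"
      have cX: "compactin Y (f ` topspace X)" by (rule cc_image_compact[OF cc closedin_topspace f Y(2)])
      have cov: "topspace X = (\<Union>\<alpha>\<in>?I. X closure_of XX \<alpha>)"
      proof
        show "topspace X \<subseteq> (\<Union>\<alpha>\<in>?I. X closure_of XX \<alpha>)"
        proof
          fix x assume "x \<in> topspace X"
          then obtain \<alpha> where a: "\<alpha> \<in> ?I" "x \<in> XX \<alpha>" using XX(1) by auto
          then have "x \<in> X closure_of XX \<alpha>" using sub[OF a(1)] by blast
          then show "x \<in> (\<Union>\<alpha>\<in>?I. X closure_of XX \<alpha>)" using a(1) by blast
        qed
        show "(\<Union>\<alpha>\<in>?I. X closure_of XX \<alpha>) \<subseteq> topspace X" by (rule UN_least, rule closure_of_subset_topspace)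
      qed
      have cK: "compactin Y (f ` (X closure_of XX \<alpha>))" if "\<alpha> \<in> ?I" for \<alpha>
        by (rule cc_image_compact[OF cc closedin_closure_of f Y(2)])
      obtain \<beta> where \<beta>: "\<beta> \<in> ?I" "f ` (X closure_of XX \<beta>) = f ` topspace X"
        using stab_L[OF Y f cov cK cX CBK] by blast
      show "\<exists>Z. Lindelof_in X Z \<and> closedin X Z \<and> f ` Z = f ` topspace X"
      proof (intro exI conjI)
        show "Lindelof_in X (X closure_of XX \<beta>)" using bspec[OF XX(2) \<beta>(1)] by simp
        show "closedin X (X closure_of XX \<beta>)" by simp
        show "f ` (X closure_of XX \<beta>) = f ` topspace X" by (rule \<beta>(2))
      qed
    qed
  qed
qed

theorem theorem5p8:
  fixes X :: "'a topology" and Y :: "'b topology" and r :: "'i rel"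
  assumes "Hausdorff_space X" and "Hausdorff_space Y" and "metrizable_space Y"
    and "Card_order r" and "infinite (Field r)"
  shows "(strict_chain r X (compactin X) \<longrightarrow> L_cl_prop X Y) \<and>
         (countably_compact_space X \<and>
          strict_chain r X (\<lambda>H. openin X H \<and> (\<exists>L. Lindelof_in X L \<and> H \<subseteq> L))
            \<longrightarrow> BR_prop X Y) \<and>
         (countably_compact_space X \<and> type_I_space X \<longrightarrow> BR_cl_prop X Y \<and> L_cl_prop X Y)"
proof -
  have A: "strict_chain r X (compactin X) \<longrightarrow> L_cl_prop X Y"
  proof
  assume "strict_chain r X (compactin X)"
  then obtain H where H: "topspace X = (\<Union>\<alpha>\<in>Field r. H \<alpha>)"
     "\<forall>\<alpha>\<in>Field r. \<forall>\<beta>\<in>Field r. (\<alpha>, \<beta>) \<in> r \<and> \<alpha> \<noteq> \<beta> \<longrightarrow> H \<alpha> \<subset> H \<beta>"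
     "\<forall>\<alpha>\<in>Field r. compactin X (H \<alpha>)"
    unfolding strict_chain_def by blast
  have mono: "H \<alpha> \<subseteq> H \<beta>" if "\<alpha> \<in> Field r" "\<beta> \<in> Field r" "(\<alpha>,\<beta>)\<in>r" for \<alpha> \<beta>
  proof (cases "\<alpha> = \<beta>")
    case False then show ?thesis using H(2) that by blast
  qed simp
  from card_order_dichotomy[OF assms(4) mono] show "L_cl_prop X Y"
  proof
    assume CB0: "\<forall>S. S \<subseteq> Field r \<and> countable S \<longrightarrow> (\<exists>\<delta>\<in>Field r. \<forall>\<alpha>\<in>S. H \<alpha> \<subseteq> H \<delta>)"
    then have CB: "\<And>S. S \<subseteq> Field r \<Longrightarrow> countable S \<Longrightarrow> \<exists>\<delta>\<in>Field r. \<forall>\<alpha>\<in>S. H \<alpha> \<subseteq> H \<delta>" by blast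
    show ?thesis unfolding L_cl_prop_def
    proof (intro disjI2 allI impI)
      fix f assume f: "continuous_map X Y f"
      have cK: "compactin Y (f ` H \<alpha>)" if "\<alpha>\<in>Field r" for \<alpha> by (rule image_compactin[OF bspec[OF H(3) that] f])
      have cX: "compactin Y (f ` topspace X)"
      proof (rule metrizable_BW_compact[OF assms(3)])
        show "f ` topspace X \<subseteq> topspace Y" using f continuous_map_image_subset_topspace by blast
        fix T assume T: "T \<subseteq> f ` topspace X" "infinite T"
        obtain \<sigma> :: "nat \<Rightarrow> _" where \<sigma>: "inj \<sigma>" "range \<sigma> \<subseteq> T" using infinite_countable_subset T(2) by meson
        have "\<forall>n. \<exists>\<alpha>. \<alpha> \<in> Field r \<and> \<sigma> n \<in> f ` H \<alpha>"
        proof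
          fix n
          have "\<sigma> n \<in> f ` topspace X" using \<sigma> T(1) by blast
          then show "\<exists>\<alpha>. \<alpha> \<in> Field r \<and> \<sigma> n \<in> f ` H \<alpha>" unfolding H(1) by blast
        qed
        then obtain a where a: "\<forall>n. a n \<in> Field r \<and> \<sigma> n \<in> f ` H (a n)" by (rule choice[THEN exE]) blast
        have "\<exists>\<delta>\<in>Field r. \<forall>\<alpha>\<in>range a. H \<alpha> \<subseteq> H \<delta>" using a by (intro CB) auto
        then obtain \<delta> where \<delta>: "\<delta> \<in> Field r" "\<forall>\<alpha>\<in>range a. H \<alpha> \<subseteq> H \<delta>" by blast
        have "range \<sigma> \<subseteq> f ` H \<delta>"
        proof
          fix y assume "y \<in> range \<sigma>"
          then obtain n where "y = \<sigma> n" by blast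
          then show "y \<in> f ` H \<delta>" using a \<delta>(2) by blast
        qed
        moreover have "infinite (range \<sigma>)" using \<sigma>(1) by (simp add: range_inj_infinite)
        ultimately have "f ` H \<delta> \<inter> Y derived_set_of (range \<sigma>) \<noteq> {}"
          using compactin_imp_Bolzano_Weierstrass[OF cK[OF \<delta>(1)], of "range \<sigma>"] by blast
        moreover have "Y derived_set_of (range \<sigma>) \<subseteq> Y derived_set_of T" using \<sigma>(2) by (rule derived_set_of_mono)
        moreover have "f ` H \<delta> \<subseteq> f ` topspace X" using H(1) \<delta>(1) by auto
        ultimately show "f ` topspace X \<inter> Y derived_set_of T \<noteq> {}" by blast
      qed
      obtain \<beta> where \<beta>: "\<beta> \<in> Field r" "f ` H \<beta> = f ` topspace X"
        using stab_L[OF assms(2,3) f H(1) cK cX CB] by blast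
      show "\<exists>Z. Lindelof_in X Z \<and> closedin X Z \<and> f ` Z = f ` topspace X"
      proof (intro exI conjI)
        have "compactin X (H \<beta>)" using H(3) \<beta>(1) by blast
        then show "Lindelof_in X (H \<beta>)" unfolding Lindelof_in_def
          using compactin_subset_topspace[OF \<open>compactin X (H \<beta>)\<close>] compact_imp_Lindelof_space[OF compact_space_subtopology[OF \<open>compactin X (H \<beta>)\<close>]] by simp
        show "closedin X (H \<beta>)" by (rule compactin_imp_closedin[OF assms(1) \<open>compactin X (H \<beta>)\<close>])
        show "f ` H \<beta> = f ` topspace X" by (rule \<beta>(2))
      qed
    qed
  next
    assume "\<exists>S\<subseteq>Field r. countable S \<and> (\<Union>\<alpha>\<in>Field r. H \<alpha>) = (\<Union>\<alpha>\<in>S. H \<alpha>)"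
    then obtain S where S: "S \<subseteq> Field r" "countable S" "topspace X = \<Union>(H ` S)" using H(1) by auto
    have "Lindelof_space (subtopology X (\<Union>(H ` S)))"
    proof (rule Lindelof_space_Union)
      show "countable (H ` S)" using S(2) by simp
      fix U assume "U \<in> H ` S"
      then have "compactin X U" using S(1) H(3) by blast
      then show "Lindelof_space (subtopology X U)"
        using compact_imp_Lindelof_space compact_space_subtopology by blast
    qed
    then have "Lindelof_space X" by (metis S(3) subtopology_topspace)
    then show ?thesis unfolding L_cl_prop_def by blast
  qed
  qed
  have B: "countably_compact_space X \<and>
          strict_chain r X (\<lambda>H. openin X H \<and> (\<exists>L. Lindelof_in X L \<and> H \<subseteq> L)) \<longrightarrow> BR_prop X Y"
  proof
  assume asm: "countably_compact_space X \<and>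
          strict_chain r X (\<lambda>H. openin X H \<and> (\<exists>L. Lindelof_in X L \<and> H \<subseteq> L))"
  then have cc: "countably_compact_space X" by blast
  obtain H where H: "topspace X = (\<Union>\<alpha>\<in>Field r. H \<alpha>)"
     "\<forall>\<alpha>\<in>Field r. \<forall>\<beta>\<in>Field r. (\<alpha>, \<beta>) \<in> r \<and> \<alpha> \<noteq> \<beta> \<longrightarrow> H \<alpha> \<subset> H \<beta>"
     "\<forall>\<alpha>\<in>Field r. openin X (H \<alpha>) \<and> (\<exists>L. Lindelof_in X L \<and> H \<alpha> \<subseteq> L)"
    using asm unfolding strict_chain_def by blast
  from bchoice[OF H(3)[rule_format, THEN conjunct2, THEN ballI]] 
  have "\<exists>L. \<forall>\<alpha>\<in>Field r. Lindelof_in X (L \<alpha>) \<and> H \<alpha> \<subseteq> L \<alpha>" .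
  then obtain L where L: "\<forall>\<alpha>\<in>Field r. Lindelof_in X (L \<alpha>) \<and> H \<alpha> \<subseteq> L \<alpha>" by blast
  have op: "openin X (H \<alpha>)" if "\<alpha> \<in> Field r" for \<alpha> using H(3) that by blast
  have mono: "H \<alpha> \<subseteq> H \<beta>" if "\<alpha> \<in> Field r" "\<beta> \<in> Field r" "(\<alpha>,\<beta>)\<in>r" for \<alpha> \<beta>
  proof (cases "\<alpha> = \<beta>")
    case False then show ?thesis using H(2) that by blast
  qed simp
  from card_order_dichotomy[OF assms(4) mono] show "BR_prop X Y"
  proof
    assume CB0: "\<forall>S. S \<subseteq> Field r \<and> countable S \<longrightarrow> (\<exists>\<delta>\<in>Field r. \<forall>\<alpha>\<in>S. H \<alpha> \<subseteq> H \<delta>)"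
    then have CB: "\<And>S. S \<subseteq> Field r \<Longrightarrow> countable S \<Longrightarrow> \<exists>\<delta>\<in>Field r. \<forall>\<alpha>\<in>S. H \<alpha> \<subseteq> H \<delta>" by blast
    show ?thesis unfolding BR_prop_def
    proof (intro disjI2 allI impI)
      fix f assume f: "continuous_map X Y f"
      have cX: "compactin Y (f ` topspace X)" by (rule cc_image_compact[OF cc closedin_topspace f assms(3)])
      have cC: "compactin Y (f ` (topspace X - H \<alpha>))" if "\<alpha> \<in> Field r" for \<alpha>
        by (rule cc_image_compact[OF cc _ f assms(3)]) (use op[OF that] in auto)
      obtain \<beta>0 where \<beta>0: "\<beta>0 \<in> Field r" "\<forall>\<beta>\<in>Field r. f ` (topspace X - H \<beta>0) \<subseteq> f ` (topspace X - H \<beta>)"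
        using stab_BR[OF assms(2,3) f cC cX CB] by blast
      show "\<exists>Z. Lindelof_in X Z \<and> (\<forall>W. Lindelof_in X W \<and> Z \<subseteq> W \<longrightarrow> f ` (topspace X - W) = f ` (topspace X - Z))"
      proof (intro exI conjI allI impI)
        show "Lindelof_in X (L \<beta>0)" using L \<beta>0(1) by blast
        fix W assume W: "Lindelof_in X W \<and> L \<beta>0 \<subseteq> W"
        obtain \<delta> where \<delta>: "\<delta> \<in> Field r" "W \<subseteq> H \<delta>"
          using Lindelof_in_bound[OF conjunct1[OF W] H(1) op CB] by blast
        show "f ` (topspace X - W) = f ` (topspace X - L \<beta>0)"
        proof
          show "f ` (topspace X - W) \<subseteq> f ` (topspace X - L \<beta>0)" using W by blast
          have "f ` (topspace X - L \<beta>0) \<subseteq> f ` (topspace X - H \<beta>0)" using L \<beta>0(1) by blast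
          also have "\<dots> \<subseteq> f ` (topspace X - H \<delta>)" using \<beta>0(2) \<delta>(1) by blast
          also have "\<dots> \<subseteq> f ` (topspace X - W)" using \<delta>(2) by blast
          finally show "f ` (topspace X - L \<beta>0) \<subseteq> f ` (topspace X - W)" .
        qed
      qed
    qed
  next
    assume "\<exists>S\<subseteq>Field r. countable S \<and> (\<Union>\<alpha>\<in>Field r. H \<alpha>) = (\<Union>\<alpha>\<in>S. H \<alpha>)"
    then obtain S where S: "S \<subseteq> Field r" "countable S" "topspace X = \<Union>(H ` S)" using H(1) by auto
    have LS: "\<Union>(L ` S) = topspace X"
    proof
      show "\<Union>(L ` S) \<subseteq> topspace X" using L S(1) unfolding Lindelof_in_def by blast
      show "topspace X \<subseteq> \<Union>(L ` S)" unfolding S(3) using L S(1) by blast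
    qed
    have "Lindelof_space (subtopology X (\<Union>(L ` S)))"
    proof (rule Lindelof_space_Union)
      show "countable (L ` S)" using S(2) by simp
      fix U assume "U \<in> L ` S"
      then show "Lindelof_space (subtopology X U)" using S(1) L unfolding Lindelof_in_def by blast
    qed
    then have "Lindelof_space X" by (metis LS subtopology_topspace)
    then show ?thesis unfolding BR_prop_def by blast
  qed
  qed
  have C: "countably_compact_space X \<and> type_I_space X \<longrightarrow> BR_cl_prop X Y \<and> L_cl_prop X Y"
  proof
  assume asm: "countably_compact_space X \<and> type_I_space X"
  then have cc: "countably_compact_space X" by blast
  from asm have "type_I_space X" by blast
  then obtain XX where XX0: "topspace X = (\<Union>\<alpha>\<in>Field (cardSuc natLeq). XX \<alpha>) \<and>
     (\<forall>\<alpha>\<in>Field (cardSuc natLeq). openin X (XX \<alpha>) \<and> Lindelof_in X (X closure_of (XX \<alpha>)) \<and> topspace X \<noteq> XX \<alpha>) \<and>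
     (\<forall>\<alpha>\<in>Field (cardSuc natLeq). \<forall>\<beta>\<in>Field (cardSuc natLeq). (\<alpha>, \<beta>) \<in> cardSuc natLeq \<and> \<alpha> \<noteq> \<beta> \<longrightarrow> X closure_of (XX \<alpha>) \<subseteq> XX \<beta>)"
    unfolding type_I_space_def by (rule exE)
  note XX = conjunct1[OF XX0] conjunct1[OF conjunct2[OF XX0]] conjunct2[OF conjunct2[OF XX0]]
  show "BR_cl_prop X Y \<and> L_cl_prop X Y"
  proof (rule partc[OF assms(2,3) cc XX(1)])
    show "\<forall>\<alpha>\<in>Field (cardSuc natLeq). openin X (XX \<alpha>) \<and> Lindelof_in X (X closure_of (XX \<alpha>))"
      using XX(2) by blast
    fix S assume S: "S \<subseteq> Field (cardSuc natLeq)" "countable S"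
    obtain \<delta> where \<delta>: "\<delta> \<in> Field (cardSuc natLeq)" "\<forall>\<alpha>\<in>S. (\<alpha>,\<delta>) \<in> cardSuc natLeq \<and> \<alpha> \<noteq> \<delta>"
      using omega1_bound[OF S] by blast
    show "\<exists>\<delta>\<in>Field (cardSuc natLeq). \<forall>\<alpha>\<in>S. X closure_of XX \<alpha> \<subseteq> XX \<delta>"
    proof (intro bexI[OF _ \<delta>(1)] ballI)
      fix \<alpha> assume "\<alpha> \<in> S"
      then have "\<alpha> \<in> Field (cardSuc natLeq)" "(\<alpha>,\<delta>) \<in> cardSuc natLeq \<and> \<alpha> \<noteq> \<delta>" using \<delta>(2) S(1) by auto
      then show "X closure_of XX \<alpha> \<subseteq> XX \<delta>" using XX(3) \<delta>(1) by blast
    qed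
  qed
  qed
  show ?thesis using A B C by blast
qed

end
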